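(* Let $n\ge2$, let $P=(p_{kl})$ be an $n\times n$ checkerboard copula, and let $i,j,i',j'\in\{1,\dots,n-1\}$ with $\eta_{i'j'}\neq0$, where $\eta_{ab}=p_{ab}+p_{a+1,b}+p_{a,b+1}+p_{a+1,b+1}$. For $\epsilon\in\mathbb{R}$ put $$\tilde P=P+\epsilon\Big(T^{ij}-\frac{\eta_{ij}}{\eta_{i'j'}}T^{i'j'}\Big).$$ Then $1-\mathrm{tr}(\Xi P\Xi P^\top)=1-\mathrm{tr}(\Xi\tilde P\Xi\tilde P^\top)+O(\epsilon^2)$ as $\epsilon\to0$.
   Context: An $n\times n$ checkerboard copula is a real $n\times n$ matrix with nonnegative entries whose row and column sums all equal $\frac1n$. $\Xi=(\xi_{kl})$ with $\xi_{kl}=1$ if $k=l$, $2$ if $k>l$, $0$ if $k<l$. For $a,b\in\{1,\dots,n-1\}$, $T^{ab}=\mathbf{e}_a\mathbf{e}_b^\top+\mathbf{e}_{a+1}\mathbf{e}_{b+1}^\top-\mathbf{e}_a\mathbf{e}_{b+1}^\top-\mathbf{e}_{a+1}\mathbf{e}_b^\top$, where $\mathbf{e}_k$ is the $k$-th standard unit column vector of $\mathbb{R}^n$. *)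

theory Defs
  imports Complex_Main "HOL-Library.Landau_Symbols"
begin

(* n x n matrices are represented as functions nat => nat => real, indices 1..n *)

definition checkerboard_copula :: "nat \<Rightarrow> (nat \<Rightarrow> nat \<Rightarrow> real) \<Rightarrow> bool" where
  "checkerboard_copula n P \<longleftrightarrow>
     (\<forall>k\<in>{1..n}. \<forall>l\<in>{1..n}. P k l \<ge> 0) \<and>
     (\<forall>k\<in>{1..n}. (\<Sum>l=1..n. P k l) = 1 / real n) \<and>
     (\<forall>l\<in>{1..n}. (\<Sum>k=1..n. P k l) = 1 / real n)"

definition Xi :: "nat \<Rightarrow> nat \<Rightarrow> real" where
  "Xi k l = (if k = l then 1 else if k > l then 2 else 0)"

definition Tmat :: "nat \<Rightarrow> nat \<Rightarrow> nat \<Rightarrow> nat \<Rightarrow> real" where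
  "Tmat a b k l =
     (if k = a \<and> l = b then 1 else 0) + (if k = a + 1 \<and> l = b + 1 then 1 else 0)
     - (if k = a \<and> l = b + 1 then 1 else 0) - (if k = a + 1 \<and> l = b then 1 else 0)"

definition eta :: "(nat \<Rightarrow> nat \<Rightarrow> real) \<Rightarrow> nat \<Rightarrow> nat \<Rightarrow> real" where
  "eta P a b = P a b + P (a + 1) b + P a (b + 1) + P (a + 1) (b + 1)"

definition trXiPXiPt :: "nat \<Rightarrow> (nat \<Rightarrow> nat \<Rightarrow> real) \<Rightarrow> real" where
  "trXiPXiPt n P = (\<Sum>k=1..n. \<Sum>l=1..n. \<Sum>m=1..n. \<Sum>r=1..n.
       Xi k l * P l m * Xi m r * P k r)"

end

theory Submission
  imports Defs
begin

lemma delta2: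
  fixes H :: "nat \<Rightarrow> nat \<Rightarrow> real"
  assumes "a \<in> A" "b \<in> B" "finite A" "finite B"
  shows "(\<Sum>k\<in>A. \<Sum>r\<in>B. (if k = a then 1 else 0) * ((if r = b then 1 else 0) * H k r)) = H a b"
proof -
  have "(\<Sum>k\<in>A. \<Sum>r\<in>B. (if k = a then 1 else 0) * ((if r = b then 1 else 0) * H k r))
      = (\<Sum>k\<in>A. if k = a then (\<Sum>r\<in>B. if r = b then H k r else 0) else 0)"
    by (rule sum.cong[OF refl]) (auto intro!: sum.cong)
  also have "\<dots> = H a b" using assms by (simp add: sum.delta')
  finally show ?thesis .
qed

lemma swap1:
  fixes f :: "nat \<Rightarrow> nat \<Rightarrow> nat \<Rightarrow> nat \<Rightarrow> real"
  shows "(\<Sum>k\<in>A. \<Sum>l\<in>A. \<Sum>m\<in>A. \<Sum>r\<in>A. f k l m r) = (\<Sum>k\<in>A. \<Sum>r\<in>A. \<Sum>l\<in>A. \<Sum>m\<in>A. f k l m r)"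
proof -
  have "(\<Sum>k\<in>A. \<Sum>l\<in>A. \<Sum>m\<in>A. \<Sum>r\<in>A. f k l m r) = (\<Sum>k\<in>A. \<Sum>l\<in>A. \<Sum>r\<in>A. \<Sum>m\<in>A. f k l m r)"
    by (rule sum.cong[OF refl], rule sum.cong[OF refl], rule sum.swap)
  also have "\<dots> = (\<Sum>k\<in>A. \<Sum>r\<in>A. \<Sum>l\<in>A. \<Sum>m\<in>A. f k l m r)"
    by (rule sum.cong[OF refl], rule sum.swap)
  finally show ?thesis .
qed

lemma swap2:
  fixes f :: "nat \<Rightarrow> nat \<Rightarrow> nat \<Rightarrow> nat \<Rightarrow> real"
  shows "(\<Sum>k\<in>A. \<Sum>l\<in>A. \<Sum>m\<in>A. \<Sum>r\<in>A. f k l m r) = (\<Sum>l\<in>A. \<Sum>m\<in>A. \<Sum>k\<in>A. \<Sum>r\<in>A. f k l m r)"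
proof -
  have "(\<Sum>k\<in>A. \<Sum>l\<in>A. \<Sum>m\<in>A. \<Sum>r\<in>A. f k l m r) = (\<Sum>l\<in>A. \<Sum>k\<in>A. \<Sum>m\<in>A. \<Sum>r\<in>A. f k l m r)"
    by (rule sum.swap)
  also have "\<dots> = (\<Sum>l\<in>A. \<Sum>m\<in>A. \<Sum>k\<in>A. \<Sum>r\<in>A. f k l m r)"
    by (rule sum.cong[OF refl], rule sum.swap)
  finally show ?thesis .
qed

definition G :: "nat \<Rightarrow> (nat \<Rightarrow> nat \<Rightarrow> real) \<Rightarrow> nat \<Rightarrow> nat \<Rightarrow> real" where
  "G n P k r = (\<Sum>l=1..n. \<Sum>m=1..n. Xi k l * P l m * Xi m r + Xi l k * P l m * Xi r m)"

definition Blin :: "nat \<Rightarrow> (nat \<Rightarrow> nat \<Rightarrow> real) \<Rightarrow> (nat \<Rightarrow> nat \<Rightarrow> real) \<Rightarrow> real" where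
  "Blin n P D = (\<Sum>k=1..n. \<Sum>r=1..n. D k r * G n P k r)"

lemma pwE: "(x::real) * (p + e * d) * y * (q + e * f)
     = x * p * y * q + e * (x * p * y * f)
       + e * (x * d * y * q) + e^2 * (x * d * y * f)"
    by (simp add: algebra_simps power2_eq_square)

lemma dist2: "(c::real) * (\<Sum>l\<in>A. \<Sum>m\<in>B. f l m) = (\<Sum>l\<in>A. \<Sum>m\<in>B. c * f l m)"
  by (simp add: sum_distrib_left)

lemma expand:
  "trXiPXiPt n (\<lambda>k l. P k l + e * D k l) = trXiPXiPt n P + e * Blin n P D + e^2 * trXiPXiPt n D"
proof -
  let ?A = "{1..n}"
  have t1: "(\<Sum>k\<in>?A. \<Sum>l\<in>?A. \<Sum>m\<in>?A. \<Sum>r\<in>?A. Xi k l * P l m * Xi m r * D k r)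
       = (\<Sum>k\<in>?A. \<Sum>r\<in>?A. D k r * (\<Sum>l\<in>?A. \<Sum>m\<in>?A. Xi k l * P l m * Xi m r))"
    by (rule trans[OF swap1]) (unfold dist2, intro sum.cong refl, simp only: mult_ac)
  have t2: "(\<Sum>k\<in>?A. \<Sum>l\<in>?A. \<Sum>m\<in>?A. \<Sum>r\<in>?A. Xi k l * D l m * Xi m r * P k r)
       = (\<Sum>l\<in>?A. \<Sum>m\<in>?A. D l m * (\<Sum>k\<in>?A. \<Sum>r\<in>?A. Xi k l * P k r * Xi m r))"
    by (rule trans[OF swap2]) (unfold dist2, intro sum.cong refl, simp only: mult_ac)
  have B: "Blin n P D = (\<Sum>k\<in>?A. \<Sum>r\<in>?A. D k r * (\<Sum>l\<in>?A. \<Sum>m\<in>?A. Xi k l * P l m * Xi m r))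
      + (\<Sum>l\<in>?A. \<Sum>m\<in>?A. D l m * (\<Sum>k\<in>?A. \<Sum>r\<in>?A. Xi k l * P k r * Xi m r))"
    unfolding Blin_def G_def sum.distrib distrib_left ..
  have d1: "e * (\<Sum>k\<in>?A. \<Sum>l\<in>?A. \<Sum>m\<in>?A. \<Sum>r\<in>?A. g k l m r)
     = (\<Sum>k\<in>?A. \<Sum>l\<in>?A. \<Sum>m\<in>?A. \<Sum>r\<in>?A. e * g k l m r)" for e :: real and g
    by (simp add: sum_distrib_left)
  show ?thesis
    apply (unfold trXiPXiPt_def pwE sum.distrib)
    apply (unfold d1[symmetric])
    apply (unfold t1 t2 B)
    apply (simp only: distrib_left add.assoc)
    done
qed

lemma Blin_lin: "Blin n P (\<lambda>k l. D1 k l - c * D2 k l) = Blin n P D1 - c * Blin n P D2"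
  unfolding Blin_def by (simp add: left_diff_distrib sum_subtractf sum_distrib_left mult.assoc)

lemma Tsum:
  fixes H :: "nat \<Rightarrow> nat \<Rightarrow> real"
  assumes "a \<in> {1..n-1}" "b \<in> {1..n-1}"
  shows "(\<Sum>k=1..n. \<Sum>r=1..n. Tmat a b k r * H k r)
     = H a b + H (a+1) (b+1) - H a (b+1) - H (a+1) b"
proof -
  have e: "Tmat a b k r * H k r =
      (if k = a then 1 else 0) * ((if r = b then 1 else 0) * H k r)
    + (if k = a+1 then 1 else 0) * ((if r = b+1 then 1 else 0) * H k r)
    - (if k = a then 1 else 0) * ((if r = b+1 then 1 else 0) * H k r)
    - (if k = a+1 then 1 else 0) * ((if r = b then 1 else 0) * H k r)" for k r
    unfolding Tmat_def by auto
  have m: "a \<in> {1..n}" "a+1 \<in> {1..n}" "b \<in> {1..n}" "b+1 \<in> {1..n}" using assms by auto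
  show ?thesis
    unfolding e sum.distrib sum_subtractf
    using delta2[OF m(1) m(3)] delta2[OF m(2) m(4)] delta2[OF m(1) m(4)] delta2[OF m(2) m(3)]
    by simp
qed

lemma Xid1: "Xi a l - Xi (a+1) l = - ((if l = a then 1 else 0) + (if l = a+1 then 1 else 0))"
  unfolding Xi_def by (cases "l < a"; cases "l = a"; cases "l = a+1"; simp)
lemma Xid2: "Xi m b - Xi m (b+1) = (if m = b then 1 else 0) + (if m = b+1 then 1 else 0)"
  unfolding Xi_def by (cases "m < b"; cases "m = b"; cases "m = b+1"; simp)
lemma Xid3: "Xi l a - Xi l (a+1) = (if l = a then 1 else 0) + (if l = a+1 then 1 else 0)"
  unfolding Xi_def by (cases "l < a"; cases "l = a"; cases "l = a+1"; simp)
lemma Xid4: "Xi b m - Xi (b+1) m = - ((if m = b then 1 else 0) + (if m = b+1 then 1 else 0))"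
  unfolding Xi_def by (cases "m < b"; cases "m = b"; cases "m = b+1"; simp)

lemma alg:
  fixes x1 x2 y1 y2 u1 u2 v1 v2 p :: real
  shows "(x1*p*y1 + u1*p*v1) + (x2*p*y2 + u2*p*v2) - (x1*p*y2 + u1*p*v2) - (x2*p*y1 + u2*p*v1)
    = (x1-x2)*p*(y1-y2) + (u1-u2)*p*(v1-v2)"
  by (simp add: algebra_simps)

lemma alg2:
  fixes x y p :: real
  shows "(-x)*p*y + x*p*(-y) = -2*(x*(y*p))"
  by (simp add: algebra_simps)

lemma pwL:
  fixes a b l m :: nat
  shows "(Xi a l * P l m * Xi m b + Xi l a * P l m * Xi b m)
      + (Xi (a+1) l * P l m * Xi m (b+1) + Xi l (a+1) * P l m * Xi (b+1) m)
      - (Xi a l * P l m * Xi m (b+1) + Xi l a * P l m * Xi (b+1) m)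
      - (Xi (a+1) l * P l m * Xi m b + Xi l (a+1) * P l m * Xi b m)
      = -2 * (((if l = a then 1 else 0) + (if l = a+1 then 1 else 0)) * (((if m = b then 1 else 0) + (if m = b+1 then 1 else 0)) * P l m))"
  unfolding alg Xid1 Xid2 Xid3 Xid4 by (rule alg2)

lemma Gdiff:
  assumes "a \<in> {1..n-1}" "b \<in> {1..n-1}"
  shows "G n P a b + G n P (a+1) (b+1) - G n P a (b+1) - G n P (a+1) b = -2 * eta P a b"
proof -
  let ?A = "{1..n}"
  define da where "da l = ((if l = a then 1 else 0) + (if l = a+1 then 1 else 0) :: real)" for l
  define db where "db m = ((if m = b then 1 else 0) + (if m = b+1 then 1 else 0) :: real)" for m
  have pw: "(Xi a l * P l m * Xi m b + Xi l a * P l m * Xi b m)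
      + (Xi (a+1) l * P l m * Xi m (b+1) + Xi l (a+1) * P l m * Xi (b+1) m)
      - (Xi a l * P l m * Xi m (b+1) + Xi l a * P l m * Xi (b+1) m)
      - (Xi (a+1) l * P l m * Xi m b + Xi l (a+1) * P l m * Xi b m)
      = -2 * (da l * (db m * P l m))" for l m
    unfolding da_def db_def by (rule pwL)
  have S: "(\<Sum>l\<in>?A. \<Sum>m\<in>?A. da l * (db m * P l m)) = eta P a b"
  proof -
    have m: "a \<in> ?A" "a+1 \<in> ?A" "b \<in> ?A" "b+1 \<in> ?A" using assms by auto
    have e: "da l * (db m * P l m) =
      (if l = a then 1 else 0) * ((if m = b then 1 else 0) * P l m)
    + (if l = a+1 then 1 else 0) * ((if m = b+1 then 1 else 0) * P l m)
    + (if l = a then 1 else 0) * ((if m = b+1 then 1 else 0) * P l m)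
    + (if l = a+1 then 1 else 0) * ((if m = b then 1 else 0) * P l m)" for l m
      unfolding da_def db_def by (simp add: distrib_left distrib_right)
    show ?thesis
      unfolding e sum.distrib eta_def
      using delta2[OF m(1) m(3)] delta2[OF m(2) m(4)] delta2[OF m(1) m(4)] delta2[OF m(2) m(3)]
      by simp
  qed
  have "G n P a b + G n P (a+1) (b+1) - G n P a (b+1) - G n P (a+1) b
     = (\<Sum>l\<in>?A. \<Sum>m\<in>?A. -2 * (da l * (db m * P l m)))"
    unfolding G_def pw[symmetric] by (simp add: sum.distrib sum_subtractf)
  also have "\<dots> = -2 * (\<Sum>l\<in>?A. \<Sum>m\<in>?A. da l * (db m * P l m))"
    by (simp add: sum_distrib_left)
  also have "\<dots> = -2 * eta P a b" using S by simp
  finally show ?thesis .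
qed

lemma BlinT:
  assumes "a \<in> {1..n-1}" "b \<in> {1..n-1}"
  shows "Blin n P (Tmat a b) = -2 * eta P a b"
  unfolding Blin_def Tsum[OF assms] using Gdiff[OF assms] by simp

theorem lemma3:
  fixes n :: nat and P :: "nat \<Rightarrow> nat \<Rightarrow> real" and i j i' j' :: nat
  assumes "n \<ge> 2"
    and "checkerboard_copula n P"
    and "i \<in> {1..n-1}" and "j \<in> {1..n-1}" and "i' \<in> {1..n-1}" and "j' \<in> {1..n-1}"
    and "eta P i' j' \<noteq> 0"
  shows "(\<lambda>\<epsilon>::real. (1 - trXiPXiPt n P)
            - (1 - trXiPXiPt n (\<lambda>k l. P k l + \<epsilon> * (Tmat i j k l
                 - eta P i j / eta P i' j' * Tmat i' j' k l))))
         \<in> O[at 0](\<lambda>\<epsilon>. \<epsilon>^2)"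
proof -
  define D where "D = (\<lambda>k l. Tmat i j k l - eta P i j / eta P i' j' * Tmat i' j' k l)"
  have B0: "Blin n P D = 0"
    unfolding D_def Blin_lin BlinT[OF assms(3,4)] BlinT[OF assms(5,6)] using assms(7) by simp
  have eq: "(\<lambda>\<epsilon>::real. (1 - trXiPXiPt n P)
            - (1 - trXiPXiPt n (\<lambda>k l. P k l + \<epsilon> * (Tmat i j k l
                 - eta P i j / eta P i' j' * Tmat i' j' k l))))
       = (\<lambda>\<epsilon>. trXiPXiPt n D * \<epsilon>^2)"
    using expand[of n P _ D] B0 unfolding D_def by (auto simp: algebra_simps)
  show ?thesis unfolding eq
    by (rule bigoI[where c="\<bar>trXiPXiPt n D\<bar>"]) (auto simp: abs_mult)
qed

end
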